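(* Let $N\ge1$, $0<\lambda\le\Lambda$, assume $\beta=\frac{\Lambda}{\lambda}(N-1)+1>2$, and let $q>\frac{\beta}{\beta-2}$ and $\gamma>\frac{\beta}{\beta-1}$. Let $\delta$ satisfy $\max\{\frac{2}{q-1},\frac{2-\gamma}{\gamma-1}\}<\delta<\beta-2$. Then there exists $K_\delta>0$ such that $v(x)=K_\delta(1+|x|^2)^{-\delta/2}$ is a (positive, non-constant) classical solution of $$\mathcal{M}^+_{\lambda,\Lambda}(D^2v)\ge v^q+|Dv|^\gamma\quad\text{in }\mathbb{R}^N.$$
   Context: For $M\in\mathrm{Sym}_N$ with eigenvalues $e_1,\dots,e_N$, $\mathcal{M}^+_{\lambda,\Lambda}(M)=\sup_{\lambda I_N\le A\le\Lambda I_N}(-\mathrm{Tr}(AM))=-\lambda\sum_{e_k>0}e_k-\Lambda\sum_{e_k<0}e_k$. *)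

theory Defs
  imports "HOL-Analysis.Analysis"
begin

definition pucci_max :: "real \<Rightarrow> real \<Rightarrow> real^'n^'n \<Rightarrow> real" where
  "pucci_max l L M =
     (SUP A \<in> {A :: real^'n^'n. transpose A = A \<and>
                 (\<forall>\<xi>. l * (\<xi> \<bullet> \<xi>) \<le> \<xi> \<bullet> (A *v \<xi>) \<and> \<xi> \<bullet> (A *v \<xi>) \<le> L * (\<xi> \<bullet> \<xi>))}.
        - trace (A ** M))"

end

theory Submission
  imports Defs
begin

definition rk :: "real \<Rightarrow> real \<Rightarrow> real^'n \<Rightarrow> real^'n^'n" where
  "rk a c u = (\<chi> i j. a * (if i = j then 1 else 0) + c * u$i * u$j)"

lemma rk_mv: "rk a c u *v \<xi> = a *\<^sub>R \<xi> + (c * (u \<bullet> \<xi>)) *\<^sub>R u"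
proof -
  have "(\<Sum>j\<in>UNIV. (a * (if i = j then 1 else 0) + c * u$i * u$j) * \<xi>$j) = a * \<xi>$i + c * (u \<bullet> \<xi>) * u$i" for i
  proof -
    have "(\<Sum>j\<in>UNIV. (a * (if i = j then 1 else 0) + c * u$i * u$j) * \<xi>$j)
       = (\<Sum>j\<in>UNIV. (if i = j then a * \<xi>$j else 0)) + (\<Sum>j\<in>UNIV. (c * u$i) * (u$j * \<xi>$j))"
      unfolding sum.distrib[symmetric] by (rule sum.cong) (auto simp: algebra_simps)
    also have "\<dots> = a * \<xi>$i + c * (u \<bullet> \<xi>) * u$i"
      by (simp add: inner_vec_def sum_distrib_left[symmetric])
    finally show ?thesis .
  qed
  thus ?thesis by (simp add: vec_eq_iff rk_def matrix_vector_mult_def mult.commute)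
qed

lemma rk_trace: fixes u w :: "real^'n" shows "trace (rk a c u ** rk b d w) =
   a * b * real CARD('n) + a * d * (w \<bullet> w) + c * b * (u \<bullet> u) + c * d * (u \<bullet> w)^2"
proof -
  have e: "(\<Sum>k\<in>UNIV. (a * (if i = k then 1 else 0) + c * u$i * u$k) * (b * (if k = i then 1 else 0) + d * w$k * w$i))
     = a * b + a * d * w$i * w$i + c * b * u$i * u$i + c * d * (u \<bullet> w) * u$i * w$i" for i
  proof -
    have "(\<Sum>k\<in>UNIV. (a * (if i = k then 1 else 0) + c * u$i * u$k) * (b * (if k = i then 1 else 0) + d * w$k * w$i))
      = (\<Sum>k\<in>UNIV. (if i = k then a * b + a * d * w$k * w$i + c * b * u$i * u$k else 0))
        + (\<Sum>k\<in>UNIV. (c * d * u$i * w$i) * (u$k * w$k))"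
      unfolding sum.distrib[symmetric] by (rule sum.cong) (auto simp: algebra_simps)
    also have "\<dots> = a * b + a * d * w$i * w$i + c * b * u$i * u$i + c * d * (u \<bullet> w) * u$i * w$i"
      by (simp add: inner_vec_def sum_distrib_left[symmetric])
    finally show ?thesis .
  qed
  have "trace (rk a c u ** rk b d w) = (\<Sum>i\<in>UNIV. a * b + a * d * w$i * w$i + c * b * u$i * u$i + c * d * (u \<bullet> w) * u$i * w$i)"
    by (simp add: trace_def rk_def matrix_matrix_mult_def e)
  also have "\<dots> = a * b * real CARD('n) + a * d * (w \<bullet> w) + c * b * (u \<bullet> u) + c * d * (u \<bullet> w)^2"
    by (simp add: sum.distrib inner_vec_def sum_distrib_left[symmetric] power2_eq_square mult.assoc)
  finally show ?thesis .
qed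

lemma rk_transpose: "transpose (rk a c u) = rk a c u"
  by (simp add: vec_eq_iff rk_def transpose_def mult.commute)


lemma entry_eq: fixes A :: "real^'n^'n" shows "axis i 1 \<bullet> (A *v axis j 1) = A$i$j"
  by (simp add: matrix_vector_mult_basis inner_axis' column_def)

lemma entry_bound:
  fixes A :: "real^'n^'n"
  assumes sym: "transpose A = A"
    and b: "\<forall>\<xi>. l * (\<xi> \<bullet> \<xi>) \<le> \<xi> \<bullet> (A *v \<xi>) \<and> \<xi> \<bullet> (A *v \<xi>) \<le> L * (\<xi> \<bullet> \<xi>)"
    and l: "0 \<le> l"
  shows "\<bar>A$i$j\<bar> \<le> L"
proof -
  have dg: "l \<le> A$k$k \<and> A$k$k \<le> L" for k
    using b[rule_format, of "axis k 1"] by (simp add: entry_eq inner_axis_axis)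
  show ?thesis
  proof (cases "i = j")
    case True thus ?thesis using dg[of i] l by auto
  next
    case False
    have s: "A$j$i = A$i$j" using sym by (metis transpose_def vec_lambda_beta)
    have n: "(axis i 1 + axis j 1) \<bullet> (axis i 1 + axis j (1::real)) = 2"
         "(axis i 1 - axis j 1) \<bullet> (axis i 1 - axis j (1::real)) = 2"
      using False by (simp_all add: inner_add_left inner_add_right inner_diff_left inner_diff_right inner_axis_axis)
    have p: "(axis i 1 + axis j 1) \<bullet> (A *v (axis i 1 + axis j 1)) = A$i$i + A$j$j + 2 * A$i$j"
      by (simp add: matrix_vector_right_distrib inner_add_left inner_add_right entry_eq s)
    have m: "(axis i 1 - axis j 1) \<bullet> (A *v (axis i 1 - axis j 1)) = A$i$i + A$j$j - 2 * A$i$j"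
      by (simp add: matrix_vector_mult_diff_distrib inner_diff_left inner_diff_right entry_eq s)
    have "l * 2 \<le> A$i$i + A$j$j + 2 * A$i$j" using b[rule_format, of "axis i 1 + axis j 1"] n p by simp
    moreover have "l * 2 \<le> A$i$i + A$j$j - 2 * A$i$j" using b[rule_format, of "axis i 1 - axis j 1"] n m by simp
    ultimately show ?thesis using dg[of i] dg[of j] l by auto
  qed
qed

lemma trace_bound:
  fixes A M :: "real^'n^'n"
  assumes "\<And>i j. \<bar>A$i$j\<bar> \<le> L"
  shows "- trace (A ** M) \<le> (\<Sum>i\<in>UNIV. \<Sum>j\<in>UNIV. L * \<bar>M$j$i\<bar>)"
proof -
  have "- trace (A ** M) \<le> \<bar>trace (A ** M)\<bar>" by simp
  also have "\<dots> \<le> (\<Sum>i\<in>UNIV. \<Sum>j\<in>UNIV. \<bar>A$i$j * M$j$i\<bar>)"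
  proof -
    have "\<bar>trace (A ** M)\<bar> = \<bar>\<Sum>i\<in>UNIV. \<Sum>j\<in>UNIV. A$i$j * M$j$i\<bar>"
      unfolding trace_def matrix_matrix_mult_def by simp
    also have "\<dots> \<le> (\<Sum>i\<in>UNIV. \<bar>\<Sum>j\<in>UNIV. A$i$j * M$j$i\<bar>)" by (rule sum_abs)
    also have "\<dots> \<le> (\<Sum>i\<in>UNIV. \<Sum>j\<in>UNIV. \<bar>A$i$j * M$j$i\<bar>)" by (intro sum_mono sum_abs)
    finally show ?thesis .
  qed
  also have "\<dots> \<le> (\<Sum>i\<in>UNIV. \<Sum>j\<in>UNIV. L * \<bar>M$j$i\<bar>)"
    by (intro sum_mono) (simp add: abs_mult assms mult_right_mono)
  finally show ?thesis .
qed

lemma d1: fixes x :: "real^'n" and p :: real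
  shows "((\<lambda>x. (1 + (norm x)\<^sup>2) powr p) has_derivative
     (\<lambda>h. (p * (1 + (norm x)\<^sup>2) powr (p - 1) * 2) * (x \<bullet> h))) (at x)"
proof -
  have pos: "0 < 1 + x \<bullet> x" by (simp add: add_pos_nonneg)
  have "((\<lambda>x. (1 + x \<bullet> x) powr p) has_derivative
     (\<lambda>h. (1 + x \<bullet> x) powr p * (0 * ln (1 + x \<bullet> x) + (0 + (x \<bullet> h + h \<bullet> x)) * p / (1 + x \<bullet> x)))) (at x)"
    by (intro derivative_intros pos) auto
  moreover have "(\<lambda>h. (1 + x \<bullet> x) powr p * (0 * ln (1 + x \<bullet> x) + (0 + (x \<bullet> h + h \<bullet> x)) * p / (1 + x \<bullet> x)))
     = (\<lambda>h. (p * (1 + x \<bullet> x) powr (p - 1) * 2) * (x \<bullet> h))"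
    using pos by (auto simp: fun_eq_iff powr_diff inner_commute field_simps)
  ultimately show ?thesis by (simp add: power2_norm_eq_inner)
qed

lemma pucci_lower:
  fixes A M :: "real^'n^'n"
  assumes "0 \<le> l" "transpose A = A"
    "\<forall>\<xi>. l * (\<xi> \<bullet> \<xi>) \<le> \<xi> \<bullet> (A *v \<xi>) \<and> \<xi> \<bullet> (A *v \<xi>) \<le> L * (\<xi> \<bullet> \<xi>)"
  shows "- trace (A ** M) \<le> pucci_max l L M"
  unfolding pucci_max_def
proof (rule cSUP_upper)
  show "A \<in> {A :: real^'n^'n. transpose A = A \<and>
                 (\<forall>\<xi>. l * (\<xi> \<bullet> \<xi>) \<le> \<xi> \<bullet> (A *v \<xi>) \<and> \<xi> \<bullet> (A *v \<xi>) \<le> L * (\<xi> \<bullet> \<xi>))}"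
    using assms by simp
  show "bdd_above ((\<lambda>A. - trace (A ** M)) ` {A :: real^'n^'n. transpose A = A \<and>
                 (\<forall>\<xi>. l * (\<xi> \<bullet> \<xi>) \<le> \<xi> \<bullet> (A *v \<xi>) \<and> \<xi> \<bullet> (A *v \<xi>) \<le> L * (\<xi> \<bullet> \<xi>))})"
    by (rule bdd_aboveI2[where M = "\<Sum>i\<in>UNIV. \<Sum>j\<in>UNIV. L * \<bar>M$j$i\<bar>"])
       (use assms(1) in \<open>auto intro!: trace_bound entry_bound\<close>)
qed

lemma K_choice:
  fixes q g C D :: real
  assumes "q > 1" "g > 1" "C > 0" "D \<ge> 0"
  shows "\<exists>K>0. K powr (q - 1) + D * K powr (g - 1) \<le> C"
proof -
  define e where "e = min (q - 1) (g - 1)"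
  have e: "e > 0" using assms by (simp add: e_def)
  define K0 where "K0 = (C / (1 + D)) powr (1 / e)"
  define K where "K = min 1 K0"
  have K0: "K0 > 0" using assms by (simp add: K0_def)
  have K: "K > 0" "K \<le> 1" "K \<le> K0" using K0 by (auto simp: K_def)
  have K0e: "K0 powr e = C / (1 + D)" using e assms by (simp add: K0_def powr_powr)
  have Ke: "K powr e \<le> C / (1 + D)" using K0e powr_mono2[of e K K0] K e by simp
  have "K powr (q - 1) \<le> K powr e" using K by (intro powr_mono') (auto simp: e_def)
  moreover have "K powr (g - 1) \<le> K powr e" using K by (intro powr_mono') (auto simp: e_def)
  ultimately have "K powr (q - 1) + D * K powr (g - 1) \<le> (1 + D) * K powr e"
    using assms(4) by (simp add: distrib_right add_mono mult_left_mono)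
  also have "\<dots> \<le> C" using Ke assms by (simp add: field_simps)
  finally show ?thesis using K by blast
qed



theorem mainTheorem5:
  fixes l L \<beta> q \<gamma> \<delta> :: real
  assumes "0 < l" and "l \<le> L"
    and "\<beta> = L / l * (real CARD('n) - 1) + 1" and "\<beta> > 2"
    and "q > \<beta> / (\<beta> - 2)" and "\<gamma> > \<beta> / (\<beta> - 1)"
    and "max (2 / (q - 1)) ((2 - \<gamma>) / (\<gamma> - 1)) < \<delta>" and "\<delta> < \<beta> - 2"
  shows "\<exists>K > 0. let v = (\<lambda>x :: real^'n. K * (1 + (norm x)\<^sup>2) powr (- \<delta> / 2)) in
           (\<forall>x. v x > 0) \<and> (\<exists>x y. v x \<noteq> v y) \<and>
           (\<exists>Dv D2v. continuous_on UNIV D2v \<and>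
              (\<forall>x. (v has_derivative (\<lambda>h. Dv x \<bullet> h)) (at x) \<and>
                   (Dv has_derivative (\<lambda>h. D2v x *v h)) (at x) \<and>
                   pucci_max l L (D2v x) \<ge> v x powr q + norm (Dv x) powr \<gamma>))"
  proof -
  note [simp del] = One_nat_def
  define N where "N = real CARD('n)"
  have b2: "\<beta> - 2 > 0" using assms by simp
  have "\<beta> / (\<beta> - 2) > 1" using b2 by (simp add: field_simps)
  hence q1: "q > 1" using assms by linarith
  have "\<beta> / (\<beta> - 1) > 1" using assms by (simp add: field_simps)
  hence g1: "\<gamma> > 1" using assms by linarith
  have dq: "2 / (q - 1) < \<delta>" and dg: "(2 - \<gamma>) / (\<gamma> - 1) < \<delta>" using assms(7) by auto
  have hq: "2 < \<delta> * (q - 1)" using dq q1 by (simp add: pos_divide_less_eq)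
  have hg: "2 - \<gamma> < \<delta> * (\<gamma> - 1)" using dg g1 by (simp add: pos_divide_less_eq)
  have d0: "\<delta> > 0" using dq q1 by (smt (verit) divide_pos_pos)
  have lb: "l * \<beta> = L * (N - 1) + l" using assms(1,3) by (simp add: N_def field_simps)
  define C where "C = \<delta> * l * (\<beta> - \<delta> - 2)"
  have C0: "C > 0" using d0 assms by (simp add: C_def)
  define D where "D = \<delta> powr \<gamma>"
  obtain K where K0: "K > 0" and Kc: "K powr (q - 1) + D * K powr (\<gamma> - 1) \<le> C"
    using K_choice[OF q1 g1 C0, of D] by (auto simp: D_def)
  define s where "s = (\<lambda>x::real^'n. 1 + (norm x)\<^sup>2)"
  have s1: "s x \<ge> 1" for x by (simp add: s_def)
  have s0: "s x > 0" for x using s1[of x] by linarith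
  define a where "a = (\<lambda>x. K * \<delta> * s x powr (- \<delta> / 2 - 1))"
  define b where "b = (\<lambda>x. K * \<delta> * (\<delta> + 2) * s x powr (- \<delta> / 2 - 2))"
  have a0: "a x > 0" for x using K0 d0 s0[of x] by (simp add: a_def)
  define v where "v = (\<lambda>x :: real^'n. K * (1 + (norm x)\<^sup>2) powr (- \<delta> / 2))"
  define Dv where "Dv = (\<lambda>x. (- a x) *\<^sub>R x)"
  define D2v where "D2v = (\<lambda>x. rk (- a x) (b x) x)"
  have vpos: "\<forall>x. v x > 0"
  proof
    fix x :: "real^'n"
    have "1 + (norm x)\<^sup>2 \<noteq> 0" using s0[of x] by (simp add: s_def)
    thus "v x > 0" using K0 d0 by (simp add: v_def)
  qed
  have vnc: "\<exists>x y. v x \<noteq> v y"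
  proof -
    have "(2::real) powr (- \<delta> / 2) < 1" using d0 by (intro powr_less_one) auto
    hence "v 0 \<noteq> v (axis undefined 1)" using K0 d0 by (simp add: v_def)
    thus ?thesis by blast
  qed
  have cpow: "continuous_on UNIV (\<lambda>x. s x powr p)" for p
  proof (rule continuous_on_powr)
    show "continuous_on UNIV s" unfolding s_def
      by (intro continuous_on_add continuous_on_const continuous_on_power continuous_on_norm continuous_on_id)
    show "\<forall>x\<in>UNIV. s x \<noteq> 0" using s0 by (metis less_irrefl)
  qed (rule continuous_on_const)
  have ca: "continuous_on UNIV a" unfolding a_def
    by (intro continuous_on_mult continuous_on_const cpow)
  have cb: "continuous_on UNIV b" unfolding b_def
    by (intro continuous_on_mult continuous_on_const cpow)
  have cont: "continuous_on UNIV D2v"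
    unfolding D2v_def rk_def
    by (intro continuous_on_vec_lambda continuous_on_add continuous_on_mult continuous_on_minus
          ca cb continuous_on_const continuous_on_component continuous_on_id)
  have dv: "(v has_derivative (\<lambda>h. Dv x \<bullet> h)) (at x)" for x
  proof -
    have "(v has_derivative (\<lambda>h. K * (((- \<delta> / 2) * (1 + (norm x)\<^sup>2) powr (- \<delta> / 2 - 1) * 2) * (x \<bullet> h)))) (at x)"
      unfolding v_def by (intro has_derivative_mult_right d1)
    moreover have "(\<lambda>h. K * (((- \<delta> / 2) * (1 + (norm x)\<^sup>2) powr (- \<delta> / 2 - 1) * 2) * (x \<bullet> h))) = (\<lambda>h. Dv x \<bullet> h)"
      by (auto simp: fun_eq_iff Dv_def a_def s_def)
    ultimately show ?thesis by simp
  qed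
  have d2v: "(Dv has_derivative (\<lambda>h. D2v x *v h)) (at x)" for x
  proof -
    define G where "G = (\<lambda>h. - (K * \<delta> * (((- \<delta> / 2 - 1) * (1 + (norm x)\<^sup>2) powr (- \<delta> / 2 - 1 - 1) * 2) * (x \<bullet> h))))"
    have g: "((\<lambda>x. - a x) has_derivative G) (at x)"
      unfolding a_def s_def G_def by (intro has_derivative_minus has_derivative_mult_right d1)
    have "(Dv has_derivative (\<lambda>h. (- a x) *\<^sub>R h + G h *\<^sub>R x)) (at x)"
      unfolding Dv_def by (intro has_derivative_scaleR g has_derivative_ident)
    moreover have "(\<lambda>h. (- a x) *\<^sub>R h + G h *\<^sub>R x) = (\<lambda>h. D2v x *v h)"
      by (auto simp: fun_eq_iff D2v_def rk_mv b_def s_def G_def algebra_simps)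
    ultimately show ?thesis by simp
  qed
  have ineq: "pucci_max l L (D2v x) \<ge> v x powr q + norm (Dv x) powr \<gamma>" for x
  proof -
    define u where "u = (if x = 0 then axis undefined 1 else (1 / norm x) *\<^sub>R x)"
    have uu: "u \<bullet> u = 1" by (auto simp: u_def inner_axis_axis power2_norm_eq_inner[symmetric])
    have ux: "(u \<bullet> x)\<^sup>2 = x \<bullet> x"
      by (auto simp: u_def power2_norm_eq_inner[symmetric] power2_eq_square)
    define A where "A = rk L (- (L - l)) u"
    have Amv: "\<xi> \<bullet> (A *v \<xi>) = L * (\<xi> \<bullet> \<xi>) - (L - l) * (u \<bullet> \<xi>)\<^sup>2" for \<xi>
      by (simp add: A_def rk_mv inner_commute power2_eq_square algebra_simps)
    have Amem: "\<forall>\<xi>. l * (\<xi> \<bullet> \<xi>) \<le> \<xi> \<bullet> (A *v \<xi>) \<and> \<xi> \<bullet> (A *v \<xi>) \<le> L * (\<xi> \<bullet> \<xi>)"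
    proof
      fix \<xi> :: "real^'n"
      have cs: "(u \<bullet> \<xi>)\<^sup>2 \<le> \<xi> \<bullet> \<xi>" using Cauchy_Schwarz_ineq[of u \<xi>] uu by simp
      have "(L - l) * (u \<bullet> \<xi>)\<^sup>2 \<le> (L - l) * (\<xi> \<bullet> \<xi>)" using cs assms(2) by (intro mult_left_mono) auto
      moreover have "0 \<le> (L - l) * (u \<bullet> \<xi>)\<^sup>2" using assms(2) by simp
      ultimately show "l * (\<xi> \<bullet> \<xi>) \<le> \<xi> \<bullet> (A *v \<xi>) \<and> \<xi> \<bullet> (A *v \<xi>) \<le> L * (\<xi> \<bullet> \<xi>)"
        unfolding Amv by (simp add: algebra_simps)
    qed
    have low: "- trace (A ** D2v x) \<le> pucci_max l L (D2v x)"
      using assms(1) Amem by (intro pucci_lower) (auto simp: A_def rk_transpose)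
    have tr: "- trace (A ** D2v x) = a x * (l * \<beta>) - l * b x * (x \<bullet> x)"
      unfolding A_def D2v_def rk_trace lb uu ux N_def[symmetric] by (simp add: algebra_simps)
    define S where "S = s x powr (- \<delta> / 2 - 1)"
    have S0: "S > 0" using s0[of x] by (auto simp: S_def)
    have xs: "x \<bullet> x \<le> s x" by (simp add: s_def power2_norm_eq_inner)
    have bs: "b x * (x \<bullet> x) \<le> a x * (\<delta> + 2)"
    proof -
      have e: "s x powr (- \<delta> / 2 - 1) = s x powr (- \<delta> / 2 - 2) * s x"
      proof -
        have "s x powr (- \<delta> / 2 - 1) = s x powr ((- \<delta> / 2 - 2) + 1)" by (rule arg_cong[where f = "\<lambda>t. s x powr t"]) simp
        also have "\<dots> = s x powr (- \<delta> / 2 - 2) * s x powr 1" by (rule powr_add)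
        finally show ?thesis using s0[of x] by simp
      qed
      have "s x powr (- \<delta> / 2 - 2) * (x \<bullet> x) \<le> s x powr (- \<delta> / 2 - 2) * s x"
        using xs by (intro mult_left_mono) auto
      hence "(K * \<delta> * (\<delta> + 2)) * (s x powr (- \<delta> / 2 - 2) * (x \<bullet> x))
           \<le> (K * \<delta> * (\<delta> + 2)) * (s x powr (- \<delta> / 2 - 2) * s x)"
        by (rule mult_left_mono) (use K0 d0 in auto)
      thus ?thesis unfolding a_def b_def e by (simp add: ac_simps)
    qed
    have "K * C * S = a x * l * (\<beta> - \<delta> - 2)" by (simp add: a_def C_def S_def)
    also have "\<dots> \<le> - trace (A ** D2v x)" unfolding tr
    proof -
      have m: "l * (b x * (x \<bullet> x)) \<le> l * (a x * (\<delta> + 2))"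
        by (rule mult_left_mono[OF bs]) (use assms(1) in simp)
      have eq: "a x * (l * \<beta>) - l * b x * (x \<bullet> x) - a x * l * (\<beta> - \<delta> - 2)
          = l * (a x * (\<delta> + 2)) - l * (b x * (x \<bullet> x))" by (simp add: algebra_simps)
      show "a x * l * (\<beta> - \<delta> - 2) \<le> a x * (l * \<beta>) - l * b x * (x \<bullet> x)"
        using m eq by linarith
    qed
    finally have lowK: "K * C * S \<le> pucci_max l L (D2v x)" using low by linarith
    have vq: "v x powr q \<le> K powr q * S"
    proof -
      have "v x powr q = K powr q * s x powr (- \<delta> / 2 * q)"
        using K0 s0[of x] by (simp add: v_def s_def powr_mult powr_powr)
      also have "\<dots> \<le> K powr q * S" unfolding S_def
        using hq s1[of x] by (intro mult_left_mono powr_mono) (auto simp: algebra_simps)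
      finally show ?thesis .
    qed
    have dvg: "norm (Dv x) powr \<gamma> \<le> K powr \<gamma> * D * S"
    proof -
      have nx: "norm x \<le> s x powr (1/2)"
        using s0[of x] by (simp add: powr_half_sqrt s_def real_le_rsqrt)
      have "norm (Dv x) = a x * norm x" using a0[of x] by (simp add: Dv_def)
      also have "\<dots> \<le> a x * s x powr (1/2)" using nx a0[of x] by (intro mult_left_mono) auto
      also have "\<dots> = K * \<delta> * (s x powr (- \<delta> / 2 - 1) * s x powr (1/2))"
        by (simp add: a_def mult.assoc)
      also have "\<dots> = K * \<delta> * s x powr ((- \<delta> / 2 - 1) + 1/2)"
        by (simp only: powr_add)
      also have "\<dots> = K * \<delta> * s x powr (- \<delta> / 2 - 1 / 2)"
        by (rule arg_cong[where f = "\<lambda>t. K * \<delta> * s x powr t"]) simp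
      finally have "norm (Dv x) powr \<gamma> \<le> (K * \<delta> * s x powr (- \<delta> / 2 - 1 / 2)) powr \<gamma>"
        using g1 by (intro powr_mono2) auto
      also have "\<dots> = K powr \<gamma> * D * s x powr ((- \<delta> / 2 - 1 / 2) * \<gamma>)"
        using K0 d0 by (simp add: powr_mult powr_powr D_def)
      also have "\<dots> \<le> K powr \<gamma> * D * S" unfolding S_def
        using hg s1[of x] by (intro mult_left_mono powr_mono) (auto simp: D_def algebra_simps)
      finally show ?thesis .
    qed
    have "v x powr q + norm (Dv x) powr \<gamma> \<le> (K powr q + K powr \<gamma> * D) * S"
      using vq dvg by (simp add: algebra_simps)
    also have "K powr q + K powr \<gamma> * D = K * (K powr (q - 1) + D * K powr (\<gamma> - 1))"
      using K0 by (simp add: algebra_simps powr_diff)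
    also have "K * (K powr (q - 1) + D * K powr (\<gamma> - 1)) * S \<le> K * C * S"
      using Kc K0 S0 by (intro mult_right_mono mult_left_mono) auto
    finally show ?thesis using lowK by linarith
  qed
  show ?thesis
    unfolding Let_def
    apply (rule exI[of _ K])
    using K0 vpos vnc cont dv d2v ineq unfolding v_def
    by blast
qed


end
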